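(* Consider the generative logic with $\mu\to 1$ in the setting below. Let $\Omega$ and $\Delta$ be finite multisets of time-indexed formulas such that $E'(\Delta)\neq\emptyset$. Then $$p(\Omega\mid\Delta)=\frac{|E(\Omega)\cap E'(\Delta)|}{|E'(\Delta)|}.$$
   Context: Let $\mathcal{L}$ be a propositional language and let $K,T\ge1$. There are data sequences $d_1,\dots,d_K$; repetitions are allowed, and data are identified by their index $k$. Each $d_k$ is associated with a sequence of models $m(d_k)=(m(d_k)^1,\dots,m(d_k)^T)$ of $\mathcal{L}$. The prior is $p(d_k)=1/K$. A time-indexed formula is written $\alpha^t$, with $\alpha\in\mathcal{L}$ and $1\le t\le T$. Write $[\![\alpha^t]\!]_k=1$ if $\alpha$ is true in $m(d_k)^t$, and $0$ otherwise. For $\mu\in(0,1)$ and a finite multiset $X$ of time-indexed formulas, define $$p(X\mid d_k,\mu)=\prod_{\alpha^t\in X}\mu^{[\![\alpha^t]\!]_k}(1-\mu)^{1-[\![\alpha^t]\!]_k}.$$ Then define $$p(\Omega\mid\Delta)=\lim_{\mu\to1}\frac{\sum_k p(\Omega\mid d_k,\mu)\,p(\Delta\mid d_k,\mu)\,p(d_k)}{\sum_k p(\Delta\mid d_k,\mu)\,p(d_k)}.$$ An index $k$ is an evidence of $X$ if $[\![\alpha^t]\!]_k=1$ for all $\alpha^t\in X$. Let $E(X)$ be the set of such indices. $X$ is called founded if $E(X)\neq\emptyset$. Let $MFS(\Delta)$ be the set of nonempty founded sub-multisets $S\subseteq\Delta$ that have maximum cardinality among all nonempty founded sub-multisets of $\Delta$.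 Set $E'(\Delta)=\bigcup_{S\in MFS(\Delta)}E(S)$. This union is empty if $MFS(\Delta)=\emptyset$. Cardinalities $|\cdot|$ count indices. *)

theory Defs
  imports "HOL-Analysis.Analysis" "HOL-Library.Multiset"
begin

datatype 'a form = Atom 'a | Neg "'a form" | Conj "'a form" "'a form" | Disj "'a form" "'a form"
  | Imp "'a form" "'a form" | Top | Bot

fun holds :: "('a \<Rightarrow> bool) \<Rightarrow> 'a form \<Rightarrow> bool" where
  "holds v (Atom a) = v a"
| "holds v (Neg f) = (\<not> holds v f)"
| "holds v (Conj f g) = (holds v f \<and> holds v g)"
| "holds v (Disj f g) = (holds v f \<or> holds v g)"
| "holds v (Imp f g) = (holds v f \<longrightarrow> holds v g)"
| "holds v Top = True"
| "holds v Bot = False"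

text \<open>A time-indexed formula alpha^t is a pair (alpha, t).
  m k t is the model m(d_k)^t; data indices are k in {1..K}.\<close>

definition truth :: "(nat \<Rightarrow> nat \<Rightarrow> ('a \<Rightarrow> bool)) \<Rightarrow> nat \<Rightarrow> 'a form \<times> nat \<Rightarrow> bool" where
  "truth m k x = holds (m k (snd x)) (fst x)"

definition lik :: "(nat \<Rightarrow> nat \<Rightarrow> ('a \<Rightarrow> bool)) \<Rightarrow> ('a form \<times> nat) multiset \<Rightarrow> nat \<Rightarrow> real \<Rightarrow> real" where
  "lik m X k \<mu> = prod_mset (image_mset (\<lambda>x. if truth m k x then \<mu> else 1 - \<mu>) X)"

definition evid :: "nat \<Rightarrow> (nat \<Rightarrow> nat \<Rightarrow> ('a \<Rightarrow> bool)) \<Rightarrow> ('a form \<times> nat) multiset \<Rightarrow> nat set" where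
  "evid K m X = {k \<in> {1..K}. \<forall>x \<in># X. truth m k x}"

definition founded :: "nat \<Rightarrow> (nat \<Rightarrow> nat \<Rightarrow> ('a \<Rightarrow> bool)) \<Rightarrow> ('a form \<times> nat) multiset \<Rightarrow> bool" where
  "founded K m X \<longleftrightarrow> evid K m X \<noteq> {}"

definition MFS :: "nat \<Rightarrow> (nat \<Rightarrow> nat \<Rightarrow> ('a \<Rightarrow> bool)) \<Rightarrow> ('a form \<times> nat) multiset \<Rightarrow> ('a form \<times> nat) multiset set" where
  "MFS K m D = {S. S \<subseteq># D \<and> S \<noteq> {#} \<and> founded K m S \<and>
      (\<forall>S'. S' \<subseteq># D \<and> S' \<noteq> {#} \<and> founded K m S' \<longrightarrow> size S' \<le> size S)}"

definition evid' :: "nat \<Rightarrow> (nat \<Rightarrow> nat \<Rightarrow> ('a \<Rightarrow> bool)) \<Rightarrow> ('a form \<times> nat) multiset \<Rightarrow> nat set" where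
  "evid' K m D = (\<Union>S \<in> MFS K m D. evid K m S)"

text \<open>The ratio whose limit as mu tends to 1 defines p(Omega | Delta); prior p(d_k) = 1/K.\<close>
definition gen_ratio :: "nat \<Rightarrow> (nat \<Rightarrow> nat \<Rightarrow> ('a \<Rightarrow> bool)) \<Rightarrow> ('a form \<times> nat) multiset \<Rightarrow> ('a form \<times> nat) multiset \<Rightarrow> real \<Rightarrow> real" where
  "gen_ratio K m Om D \<mu> =
     (\<Sum>k\<in>{1..K}. lik m Om k \<mu> * lik m D k \<mu> * (1 / real K)) /
     (\<Sum>k\<in>{1..K}. lik m D k \<mu> * (1 / real K))"

end

theory Submission
  imports Defs
begin

lemma lik_formula:
  "lik m X k \<mu> = \<mu> ^ size (filter_mset (truth m k) X) *
     (1 - \<mu>) ^ size (filter_mset (\<lambda>x. \<not> truth m k x) X)"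
  unfolding lik_def by (induction X) (auto simp: mult_ac)

lemma size_split: "size (filter_mset P X) + size (filter_mset (\<lambda>x. \<not> P x) X) = size X"
  by (induction X) auto

lemma evid_char: "evid K m X = {k \<in> {1..K}. size (filter_mset (truth m k) X) = size X}"
proof -
  have "(\<forall>x \<in># X. truth m k x) \<longleftrightarrow> size (filter_mset (truth m k) X) = size X" for k
  proof -
    have "size (filter_mset (truth m k) X) = size X \<longleftrightarrow> size (filter_mset (\<lambda>x. \<not> truth m k x) X) = 0"
      using size_split[of "truth m k" X] by linarith
    also have "\<dots> \<longleftrightarrow> (\<forall>x \<in># X. truth m k x)" by (auto simp: filter_mset_eq_conv)
    finally show ?thesis by simp
  qed
  then show ?thesis unfolding evid_def by auto
qed

lemma evid'_char:
  fixes D :: "('a form \<times> nat) multiset" and K :: nat and m :: "nat \<Rightarrow> nat \<Rightarrow> ('a \<Rightarrow> bool)"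
  defines "c \<equiv> \<lambda>k. size (filter_mset (truth m k) D)"
  defines "M \<equiv> Max (c ` {1..K})"
  assumes K: "K \<ge> 1" and ne: "evid' K m D \<noteq> {}"
  shows "evid' K m D = {k \<in> {1..K}. c k = M}" and "M \<ge> 1"
proof -
  have fin: "finite (c ` {1..K})" by simp
  have nemp: "c ` {1..K} \<noteq> {}" using K by auto
  have cle: "c k \<le> M" if "k \<in> {1..K}" for k
    unfolding M_def using fin that by auto
  obtain k0 where k0: "k0 \<in> {1..K}" "c k0 = M"
    using Max_in[OF fin nemp] unfolding M_def by auto
  have bound: "size S \<le> c k" if "S \<subseteq># D" "k \<in> evid K m S" for S k
  proof -
    have "filter_mset (truth m k) S = S" using that(2) unfolding evid_def
      by (auto simp: filter_mset_eq_conv)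
    hence "S = filter_mset (truth m k) S" by simp
    also have "\<dots> \<subseteq># filter_mset (truth m k) D" by (rule multiset_filter_mono[OF that(1)])
    finally show ?thesis unfolding c_def by (rule size_mset_mono)
  qed
  obtain S0 k1 where S0: "S0 \<in> MFS K m D" "k1 \<in> evid K m S0"
    using ne unfolding evid'_def by auto
  have S0p: "S0 \<subseteq># D" "S0 \<noteq> {#}" using S0(1) unfolding MFS_def by auto
  have k1: "k1 \<in> {1..K}" using S0(2) unfolding evid_def by auto
  have "size S0 \<ge> 1" using S0p(2) by (simp add: Suc_le_eq nonempty_has_size)
  moreover have "size S0 \<le> M" using bound[OF S0p(1) S0(2)] cle[OF k1] by simp
  ultimately show M1: "M \<ge> 1" by simp
  define Sk where "Sk = (\<lambda>k. filter_mset (truth m k) D)"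
  have Sk_evid: "k \<in> evid K m (Sk k)" if "k \<in> {1..K}" for k
    using that unfolding evid_def Sk_def by auto
  have Sk_MFS: "Sk k \<in> MFS K m D" if "k \<in> {1..K}" "c k = M" for k
  proof -
    have "size (Sk k) = M" using that unfolding Sk_def c_def by simp
    hence "Sk k \<noteq> {#}" using M1 by auto
    moreover have "founded K m (Sk k)" using Sk_evid[OF that(1)] unfolding founded_def by auto
    moreover have "size S' \<le> size (Sk k)" if S'sub: "S' \<subseteq># D" and S'f: "founded K m S'" for S'
    proof -
      obtain j where "j \<in> evid K m S'" using S'f unfolding founded_def by auto
      moreover hence "j \<in> {1..K}" unfolding evid_def by auto
      ultimately show ?thesis using bound[OF S'sub] cle \<open>size (Sk k) = M\<close> by fastforce
    qed
    ultimately show ?thesis unfolding MFS_def Sk_def by auto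
  qed
  show "evid' K m D = {k \<in> {1..K}. c k = M}"
  proof
    show "evid' K m D \<subseteq> {k \<in> {1..K}. c k = M}"
    proof
      fix k assume "k \<in> evid' K m D"
      then obtain S where S: "S \<in> MFS K m D" "k \<in> evid K m S" unfolding evid'_def by auto
      have kK: "k \<in> {1..K}" using S(2) unfolding evid_def by auto
      have Sp: "S \<subseteq># D" "\<forall>S'. S' \<subseteq># D \<and> S' \<noteq> {#} \<and> founded K m S' \<longrightarrow> size S' \<le> size S"
        using S(1) unfolding MFS_def by auto
      have "size (Sk k0) \<le> size S"
        using Sp(2) Sk_MFS[OF k0] unfolding MFS_def by auto
      moreover have "size (Sk k0) = M" using k0 unfolding Sk_def c_def by simp
      moreover have "size S \<le> c k" using bound[OF Sp(1) S(2)] .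
      ultimately show "k \<in> {k \<in> {1..K}. c k = M}" using cle[OF kK] kK by simp
    qed
  next
    show "{k \<in> {1..K}. c k = M} \<subseteq> evid' K m D"
      using Sk_MFS Sk_evid unfolding evid'_def by blast
  qed
qed

theorem theorem1:
  fixes K T :: nat and m :: "nat \<Rightarrow> nat \<Rightarrow> ('a \<Rightarrow> bool)"
    and \<Omega> \<Delta> :: "('a form \<times> nat) multiset"
  assumes "K \<ge> 1" and "T \<ge> 1"
    and "\<forall>x \<in># \<Omega>. 1 \<le> snd x \<and> snd x \<le> T"
    and "\<forall>x \<in># \<Delta>. 1 \<le> snd x \<and> snd x \<le> T"
    and "evid' K m \<Delta> \<noteq> {}"
  shows "(gen_ratio K m \<Omega> \<Delta> \<longlongrightarrow>
           real (card (evid K m \<Omega> \<inter> evid' K m \<Delta>)) / real (card (evid' K m \<Delta>)))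
         (at_left 1)"
proof -
  define c where "c = (\<lambda>k. size (filter_mset (truth m k) \<Delta>))"
  define M where "M = Max (c ` {1..K})"
  define a where "a = (\<lambda>k. size (filter_mset (truth m k) \<Omega>))"
  define b where "b = (\<lambda>k. size (filter_mset (\<lambda>x. \<not> truth m k x) \<Omega>))"
  define n where "n = size \<Delta>"
  have E': "evid' K m \<Delta> = {k \<in> {1..K}. c k = M}" and M1: "M \<ge> 1"
    using evid'_char[OF assms(1) assms(5)] unfolding c_def M_def by auto
  have cle: "c k \<le> M" if "k \<in> {1..K}" for k
    unfolding M_def using that by auto
  have Mn: "M \<le> n"
  proof -
    obtain k0 where "k0 \<in> {1..K}" "c k0 = M" using E' assms(5) by auto
    thus ?thesis unfolding c_def n_def by (metis size_filter_mset_lesseq)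
  qed
  have likD: "lik m \<Delta> k \<mu> = (1 - \<mu>) ^ (n - M) * (\<mu> ^ c k * (1 - \<mu>) ^ (M - c k))"
    if "k \<in> {1..K}" for k \<mu>
  proof -
    have "size (filter_mset (\<lambda>x. \<not> truth m k x) \<Delta>) = (n - M) + (M - c k)"
      using size_split[of "truth m k" \<Delta>] cle[OF that] Mn unfolding c_def n_def by linarith
    thus ?thesis unfolding lik_formula c_def by (simp add: power_add algebra_simps)
  qed
  have likO: "lik m \<Omega> k \<mu> = \<mu> ^ a k * (1 - \<mu>) ^ b k" for k \<mu>
    unfolding lik_formula a_def b_def ..
  define g where "g = (\<lambda>k (\<mu>::real). \<mu> ^ c k * (1 - \<mu>) ^ (M - c k))"
  define h where "h = (\<lambda>\<mu>. (\<Sum>k\<in>{1..K}. (\<mu> ^ a k * (1 - \<mu>) ^ b k) * g k \<mu>) /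
                            (\<Sum>k\<in>{1..K}. g k \<mu>))"
  have g1: "g k 1 = (if c k = M then 1 else 0)" if "k \<in> {1..K}" for k
    using cle[OF that] unfolding g_def by auto
  have O1: "(1::real) ^ a k * (1 - 1) ^ b k = (if k \<in> evid K m \<Omega> then 1 else 0)"
    if "k \<in> {1..K}" for k
  proof -
    have "k \<in> evid K m \<Omega> \<longleftrightarrow> b k = 0"
    proof -
      have "k \<in> evid K m \<Omega> \<longleftrightarrow> a k = size \<Omega>" using that by (simp add: evid_char a_def)
      thus ?thesis using size_split[of "truth m k" \<Omega>] unfolding a_def b_def by linarith
    qed
    thus ?thesis by simp
  qed
  have den1: "(\<Sum>k\<in>{1..K}. g k 1) = real (card (evid' K m \<Delta>))"
  proof -
    have e: "{1..K} \<inter> {k. c k = M} = {k \<in> {1..K}. c k = M}" by auto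
    have "(\<Sum>k\<in>{1..K}. g k 1) = (\<Sum>k\<in>{1..K}. if c k = M then 1 else 0)"
      by (rule sum.cong) (auto simp: g1)
    also have "\<dots> = real (card ({1..K} \<inter> {k. c k = M}))" by (simp add: sum.If_cases)
    finally show ?thesis unfolding e E' .
  qed
  have num1: "(\<Sum>k\<in>{1..K}. ((1::real) ^ a k * (1 - 1) ^ b k) * g k 1)
      = real (card (evid K m \<Omega> \<inter> evid' K m \<Delta>))"
  proof -
    have "(\<Sum>k\<in>{1..K}. ((1::real) ^ a k * (1 - 1) ^ b k) * g k 1)
        = (\<Sum>k\<in>{1..K}. if k \<in> evid K m \<Omega> \<inter> evid' K m \<Delta> then 1 else 0)"
    proof (rule sum.cong[OF refl])
      fix k assume k: "k \<in> {1..K}"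
      show "((1::real) ^ a k * (1 - 1) ^ b k) * g k 1
          = (if k \<in> evid K m \<Omega> \<inter> evid' K m \<Delta> then 1 else 0)"
        unfolding O1[OF k] g1[OF k] using k by (auto simp: E')
    qed
    also have "\<dots> = real (card ({1..K} \<inter> (evid K m \<Omega> \<inter> evid' K m \<Delta>)))"
      by (simp only: sum.If_cases finite_atLeastAtMost Collect_mem_eq) simp
    also have "{1..K} \<inter> (evid K m \<Omega> \<inter> evid' K m \<Delta>) = evid K m \<Omega> \<inter> evid' K m \<Delta>"
      by (auto simp: E')
    finally show ?thesis .
  qed
  have cardpos: "real (card (evid' K m \<Delta>)) \<noteq> 0"
    using assms(5) by (simp add: E')
  have "isCont h 1"
    unfolding h_def g_def using cardpos den1 unfolding g_def
    by (intro continuous_intros) auto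
  hence L: "(h \<longlongrightarrow> h 1) (at_left 1)"
    by (simp add: isCont_def filterlim_at_split)
  have V: "h 1 = real (card (evid K m \<Omega> \<inter> evid' K m \<Delta>)) / real (card (evid' K m \<Delta>))"
    unfolding h_def using num1 den1 by simp
  have EV: "eventually (\<lambda>\<mu>. h \<mu> = gen_ratio K m \<Omega> \<Delta> \<mu>) (at_left 1)"
  proof -
    have "h \<mu> = gen_ratio K m \<Omega> \<Delta> \<mu>" if "\<mu> < 1" for \<mu> :: real
    proof -
      have nz: "(1 - \<mu>) ^ (n - M) \<noteq> 0" "real K \<noteq> 0" using that assms(1) by auto
      have "gen_ratio K m \<Omega> \<Delta> \<mu> =
          (((1 - \<mu>) ^ (n - M) / real K) * (\<Sum>k\<in>{1..K}. (\<mu> ^ a k * (1 - \<mu>) ^ b k) * g k \<mu>)) /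
          (((1 - \<mu>) ^ (n - M) / real K) * (\<Sum>k\<in>{1..K}. g k \<mu>))"
        unfolding gen_ratio_def sum_distrib_left
        by (intro arg_cong2[where f="(/)"] sum.cong refl) (simp_all add: likD likO g_def)
      also have "\<dots> = h \<mu>" unfolding h_def using nz that by simp
      finally show ?thesis by simp
    qed
    note H = this
    have ev: "eventually (\<lambda>x. x \<in> {0<..<1}) (at_left (1::real))" by (rule eventually_at_left_real) simp
    show ?thesis using ev by (rule eventually_mono) (simp add: H)
  qed
  show ?thesis using Lim_transform_eventually[OF L EV] unfolding V .
qed

end
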